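(* Let $C$ be a contractible globular extension and $G$ an $\infty$-groupoid of type $C$. For $n\ge1$, the groupoid $\Pi_n(G)$ does not depend on the choice of the pregroupoidal structure on $C$: if two pregroupoidal structures on $C$ are given, the two resulting graphs $\Pi_n(G)$ coincide and their compositions and identities coincide.
   Context: The globe category $\mathbb{G}$ has objects $D_n$ ($n\ge0$), generated by $\sigma_n,\tau_n\colon D_{n-1}\to D_n$ ($n\ge1$) with $\sigma_{n+1}\sigma_n=\tau_{n+1}\sigma_n$, $\sigma_{n+1}\tau_n=\tau_{n+1}\tau_n$; $\sigma^i_j=\sigma_i\cdots\sigma_{j+1}$, $\tau^i_j=\tau_i\cdots\tau_{j+1}$. A table of dimensions: integers $i_1,\dots,i_n,i'_1,\dots,i'_{n-1}$ with $i_k>i'_k<i_{k+1}$; dimension = largest entry. In a category $C$ under $\mathbb{G}$, its globular sum is the colimit of $D_{i_1}\xleftarrow{\sigma^{i_1}_{i'_1}}D_{i'_1}\xrightarrow{\tau^{i_2}_{i'_1}}D_{i_2}\leftarrow\cdots\xrightarrow{\tau^{i_n}_{i'_{n-1}}}D_{i_n}$, written $D_{i_1}\amalg_{D_{i'_1}}\cdots\amalg_{D_{i'_{n-1}}}D_{i_n}$. A globular extension is a category under $\mathbb{G}$ with all globular sums. $f,g\colon D_n\to X$ are globularly parallel if $n=0$ or $f\sigma_n=g\sigma_n$, $f\tau_n=g\tau_n$; a lifting of $(f,g)$ is $h\colon D_{n+1}\to X$ with $h\sigma_{n+1}=f$, $h\tau_{n+1}=g$; $(f,g)\colon D_n\to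 S$ is admissible if globularly parallel with $S$ a globular sum of dimension $\le n+1$; $C$ is contractible if every admissible pair has a lifting. An $\infty$-groupoid of type $C$ is a presheaf $G$ on $C$ such that each canonical map $G(D_{i_1}\amalg_{D_{i'_1}}\cdots\amalg_{D_{i'_{n-1}}}D_{i_n})\to G_{i_1}\times_{G_{i'_1}}\cdots\times_{G_{i'_{n-1}}}G_{i_n}$ is bijective, where $G_i=G(D_i)$ ($i$-arrows), $s=G(\sigma_i)$, $t=G(\tau_i)$ (source, target), $s^i_j=G(\sigma^i_j)$, $t^i_j=G(\tau^i_j)$, and the fiber product consists of $(u_1,\dots,u_n)$ with $s^{i_k}_{i'_k}(u_k)=t^{i_{k+1}}_{i'_k}(u_{k+1})$. A pregroupoidal structure on $C$ consists of morphisms $\nabla^i_j\colon D_i\to D_i\amalg_{D_j}D_i$ ($i>j\ge0$), $\kappa_i\colon D_{i+1}\to D_i$, $w^i_j\colon D_i\to D_i$ with $\nabla^i_{i-1}\sigma_i=\epsilon_2\sigma_i$, $\nabla^i_{i-1}\tau_i=\epsilon_1\tau_i$ ($\epsilon_1,\epsilon_2$ the canonical inclusions of the first and second summand), $\nabla^i_j\sigma_i=(\sigma_i\amalg_{D_j}\sigma_i)\nabla^{i-1}_j$, $\nabla^i_j\tau_i=(\tau_i\amalg_{D_j}\tau_i)\nabla^{i-1}_j$ for $j<i-1$, $\kappa_i\sigma_{i+1}=\kappa_i\tau_{i+1}=\mathrm{id}$, $w^i_{i-1}\sigma_i=\tau_i$, $w^i_{i-1}\tau_i=\sigma_i$, $w^i_j\sigma_i=\sigma_iw^{i-1}_j$,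 $w^i_j\tau_i=\tau_iw^{i-1}_j$ for $j<i-1$. It induces on $G$: compositions $v\ast^i_ju=G(\nabla^i_j)(\xi)$ for $s^i_j(v)=t^i_j(u)$, $\xi$ corresponding to $(v,u)$; units $k_i=G(\kappa_i)\colon G_i\to G_{i+1}$. For $n$-arrows $u,v$, $u\sim v$ if some $(n+1)$-arrow has source $u$ and target $v$; this is an equivalence relation compatible with $\ast^n_{n-1}$. $\Pi_n(G)$ ($n\ge1$) is the graph with objects $G_{n-1}$, arrows $G_n/\sim$ with source/target induced by $s,t$, composition induced by $\ast^n_{n-1}$ and identities induced by $k_{n-1}$. *)

theory Defs
  imports Main
begin

section \<open>Categories (hom-set presentation, disjoint hom-sets)\<close>

record ('o, 'm) cat =
  obj  :: "'o set"
  hom  :: "'o \<Rightarrow> 'o \<Rightarrow> 'm set"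
  comp :: "'m \<Rightarrow> 'm \<Rightarrow> 'm"   (* comp C g f = g \<circ> f *)
  cid  :: "'o \<Rightarrow> 'm"

definition category :: "('o, 'm) cat \<Rightarrow> bool" where
  "category C \<longleftrightarrow>
     (\<forall>X Y. hom C X Y \<noteq> {} \<longrightarrow> X \<in> obj C \<and> Y \<in> obj C) \<and>
     (\<forall>X Y X' Y'. hom C X Y \<inter> hom C X' Y' \<noteq> {} \<longrightarrow> X = X' \<and> Y = Y') \<and>
     (\<forall>X \<in> obj C. cid C X \<in> hom C X X) \<and>
     (\<forall>X Y Z f g. f \<in> hom C X Y \<longrightarrow> g \<in> hom C Y Z \<longrightarrow> comp C g f \<in> hom C X Z) \<and>
     (\<forall>X Y Z W f g h. f \<in> hom C X Y \<longrightarrow> g \<in> hom C Y Z \<longrightarrow> h \<in> hom C Z W \<longrightarrow>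
        comp C h (comp C g f) = comp C (comp C h g) f) \<and>
     (\<forall>X Y f. f \<in> hom C X Y \<longrightarrow> comp C (cid C Y) f = f \<and> comp C f (cid C X) = f)"

text \<open>A functor from the globe category is given by objects D n and morphisms
  sg n, tu n : D (n-1) \<rightarrow> D n (n \<ge> 1) satisfying the globular relations.\<close>

definition globe :: "('o, 'm) cat \<Rightarrow> (nat \<Rightarrow> 'o) \<Rightarrow> (nat \<Rightarrow> 'm) \<Rightarrow> (nat \<Rightarrow> 'm) \<Rightarrow> bool" where
  "globe C D sg tu \<longleftrightarrow>
     (\<forall>n. D n \<in> obj C) \<and>
     (\<forall>n. 1 \<le> n \<longrightarrow> sg n \<in> hom C (D (n - 1)) (D n) \<and> tu n \<in> hom C (D (n - 1)) (D n)) \<and>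
     (\<forall>n. 1 \<le> n \<longrightarrow>
        comp C (sg (Suc n)) (sg n) = comp C (tu (Suc n)) (sg n) \<and>
        comp C (sg (Suc n)) (tu n) = comp C (tu (Suc n)) (tu n))"

text \<open>Iterated composites: itc C D f i j = f_i \<circ> ... \<circ> f_(j+1) : D j \<rightarrow> D i (for i \<ge> j).\<close>

fun itc :: "('o, 'm) cat \<Rightarrow> (nat \<Rightarrow> 'o) \<Rightarrow> (nat \<Rightarrow> 'm) \<Rightarrow> nat \<Rightarrow> nat \<Rightarrow> 'm" where
  "itc C D f 0 j = cid C (D j)"
| "itc C D f (Suc i) j =
     (if Suc i \<le> j then cid C (D j) else comp C (f (Suc i)) (itc C D f i j))"

text \<open>A table (i_1,...,i_n; i'_1,...,i'_(n-1)) is a pair of lists (0-indexed).\<close>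

definition is_table :: "nat list \<Rightarrow> nat list \<Rightarrow> bool" where
  "is_table is is' \<longleftrightarrow> is \<noteq> [] \<and> length is' = length is - 1 \<and>
     (\<forall>k < length is'. is' ! k < is ! k \<and> is' ! k < is ! Suc k)"

definition tdim :: "nat list \<Rightarrow> nat list \<Rightarrow> nat" where
  "tdim is is' = Max (set (is @ is'))"

definition gcocone ::
  "('o, 'm) cat \<Rightarrow> (nat \<Rightarrow> 'o) \<Rightarrow> (nat \<Rightarrow> 'm) \<Rightarrow> (nat \<Rightarrow> 'm) \<Rightarrow>
   nat list \<Rightarrow> nat list \<Rightarrow> 'o \<Rightarrow> (nat \<Rightarrow> 'm) \<Rightarrow> bool" where
  "gcocone C D sg tu is is' S e \<longleftrightarrow> S \<in> obj C \<and>
     (\<forall>k < length is. e k \<in> hom C (D (is ! k)) S) \<and>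
     (\<forall>k < length is'.
        comp C (e k) (itc C D sg (is ! k) (is' ! k)) =
        comp C (e (Suc k)) (itc C D tu (is ! Suc k) (is' ! k)))"

definition is_gsum ::
  "('o, 'm) cat \<Rightarrow> (nat \<Rightarrow> 'o) \<Rightarrow> (nat \<Rightarrow> 'm) \<Rightarrow> (nat \<Rightarrow> 'm) \<Rightarrow>
   nat list \<Rightarrow> nat list \<Rightarrow> 'o \<Rightarrow> (nat \<Rightarrow> 'm) \<Rightarrow> bool" where
  "is_gsum C D sg tu is is' S e \<longleftrightarrow> gcocone C D sg tu is is' S e \<and>
     (\<forall>X f. gcocone C D sg tu is is' X f \<longrightarrow>
        (\<exists>!h. h \<in> hom C S X \<and> (\<forall>k < length is. comp C h (e k) = f k)))"

definition globular_extension ::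
  "('o, 'm) cat \<Rightarrow> (nat \<Rightarrow> 'o) \<Rightarrow> (nat \<Rightarrow> 'm) \<Rightarrow> (nat \<Rightarrow> 'm) \<Rightarrow>
   (nat list \<Rightarrow> nat list \<Rightarrow> 'o) \<Rightarrow> (nat list \<Rightarrow> nat list \<Rightarrow> nat \<Rightarrow> 'm) \<Rightarrow> bool" where
  "globular_extension C D sg tu gs gi \<longleftrightarrow> category C \<and> globe C D sg tu \<and>
     (\<forall>is is'. is_table is is' \<longrightarrow> is_gsum C D sg tu is is' (gs is is') (gi is is'))"

definition glob_parallel ::
  "('o, 'm) cat \<Rightarrow> (nat \<Rightarrow> 'm) \<Rightarrow> (nat \<Rightarrow> 'm) \<Rightarrow> nat \<Rightarrow> 'm \<Rightarrow> 'm \<Rightarrow> bool" where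
  "glob_parallel C sg tu n f g \<longleftrightarrow> n = 0 \<or>
     (comp C f (sg n) = comp C g (sg n) \<and> comp C f (tu n) = comp C g (tu n))"

definition contractible ::
  "('o, 'm) cat \<Rightarrow> (nat \<Rightarrow> 'o) \<Rightarrow> (nat \<Rightarrow> 'm) \<Rightarrow> (nat \<Rightarrow> 'm) \<Rightarrow> bool" where
  "contractible C D sg tu \<longleftrightarrow>
     (\<forall>n is is' S e f g.
        is_table is is' \<and> tdim is is' \<le> n + 1 \<and> is_gsum C D sg tu is is' S e \<and>
        f \<in> hom C (D n) S \<and> g \<in> hom C (D n) S \<and> glob_parallel C sg tu n f g \<longrightarrow>
        (\<exists>h \<in> hom C (D (Suc n)) S.
           comp C h (sg (Suc n)) = f \<and> comp C h (tu (Suc n)) = g))"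

definition presheaf :: "('o, 'm) cat \<Rightarrow> ('o \<Rightarrow> 'a set) \<Rightarrow> ('m \<Rightarrow> 'a \<Rightarrow> 'a) \<Rightarrow> bool" where
  "presheaf C GO GM \<longleftrightarrow>
     (\<forall>X Y f. f \<in> hom C X Y \<longrightarrow> (\<forall>x \<in> GO Y. GM f x \<in> GO X)) \<and>
     (\<forall>X \<in> obj C. \<forall>x \<in> GO X. GM (cid C X) x = x) \<and>
     (\<forall>X Y Z f g. f \<in> hom C X Y \<longrightarrow> g \<in> hom C Y Z \<longrightarrow>
        (\<forall>x \<in> GO Z. GM (comp C g f) x = GM f (GM g x)))"

definition canon ::
  "('m \<Rightarrow> 'a \<Rightarrow> 'a) \<Rightarrow> (nat list \<Rightarrow> nat list \<Rightarrow> nat \<Rightarrow> 'm) \<Rightarrow> nat list \<Rightarrow> nat list \<Rightarrow> 'a \<Rightarrow> 'a list" where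
  "canon GM gi is is' x = map (\<lambda>k. GM (gi is is' k) x) [0..<length is]"

definition fiberprod ::
  "('o, 'm) cat \<Rightarrow> (nat \<Rightarrow> 'o) \<Rightarrow> (nat \<Rightarrow> 'm) \<Rightarrow> (nat \<Rightarrow> 'm) \<Rightarrow>
   ('o \<Rightarrow> 'a set) \<Rightarrow> ('m \<Rightarrow> 'a \<Rightarrow> 'a) \<Rightarrow> nat list \<Rightarrow> nat list \<Rightarrow> 'a list set" where
  "fiberprod C D sg tu GO GM is is' =
     {us. length us = length is \<and> (\<forall>k < length is. us ! k \<in> GO (D (is ! k))) \<and>
          (\<forall>k < length is'. GM (itc C D sg (is ! k) (is' ! k)) (us ! k) =
                            GM (itc C D tu (is ! Suc k) (is' ! k)) (us ! Suc k))}"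

definition infty_groupoid ::
  "('o, 'm) cat \<Rightarrow> (nat \<Rightarrow> 'o) \<Rightarrow> (nat \<Rightarrow> 'm) \<Rightarrow> (nat \<Rightarrow> 'm) \<Rightarrow>
   (nat list \<Rightarrow> nat list \<Rightarrow> 'o) \<Rightarrow> (nat list \<Rightarrow> nat list \<Rightarrow> nat \<Rightarrow> 'm) \<Rightarrow>
   ('o \<Rightarrow> 'a set) \<Rightarrow> ('m \<Rightarrow> 'a \<Rightarrow> 'a) \<Rightarrow> bool" where
  "infty_groupoid C D sg tu gs gi GO GM \<longleftrightarrow> presheaf C GO GM \<and>
     (\<forall>is is'. is_table is is' \<longrightarrow>
        bij_betw (canon GM gi is is') (GO (gs is is')) (fiberprod C D sg tu GO GM is is'))"

text \<open>nab i j : D_i \<rightarrow> D_i \<amalg>_(D_j) D_i is the chosen sum gs [i,i] [j];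
  its first/second canonical inclusions are gi [i,i] [j] 0 and gi [i,i] [j] 1.
  The map \<sigma>_i \<amalg>_(D_j) \<sigma>_i is the (unique, by the universal property) h with
  h \<circ> \<epsilon>_k = \<epsilon>_k \<circ> \<sigma>_i.\<close>

definition pregroupoidal ::
  "('o, 'm) cat \<Rightarrow> (nat \<Rightarrow> 'o) \<Rightarrow> (nat \<Rightarrow> 'm) \<Rightarrow> (nat \<Rightarrow> 'm) \<Rightarrow>
   (nat list \<Rightarrow> nat list \<Rightarrow> 'o) \<Rightarrow> (nat list \<Rightarrow> nat list \<Rightarrow> nat \<Rightarrow> 'm) \<Rightarrow>
   (nat \<Rightarrow> nat \<Rightarrow> 'm) \<Rightarrow> (nat \<Rightarrow> 'm) \<Rightarrow> (nat \<Rightarrow> nat \<Rightarrow> 'm) \<Rightarrow> bool" where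
  "pregroupoidal C D sg tu gs gi nab kap w \<longleftrightarrow>
     (\<forall>i j. j < i \<longrightarrow> nab i j \<in> hom C (D i) (gs [i, i] [j])) \<and>
     (\<forall>i. kap i \<in> hom C (D (Suc i)) (D i)) \<and>
     (\<forall>i j. j < i \<longrightarrow> w i j \<in> hom C (D i) (D i)) \<and>
     (\<forall>i. 1 \<le> i \<longrightarrow>
        comp C (nab i (i - 1)) (sg i) = comp C (gi [i, i] [i - 1] 1) (sg i) \<and>
        comp C (nab i (i - 1)) (tu i) = comp C (gi [i, i] [i - 1] 0) (tu i)) \<and>
     (\<forall>i j. j < i - 1 \<longrightarrow>
        (\<exists>h \<in> hom C (gs [i - 1, i - 1] [j]) (gs [i, i] [j]).
           comp C h (gi [i - 1, i - 1] [j] 0) = comp C (gi [i, i] [j] 0) (sg i) \<and>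
           comp C h (gi [i - 1, i - 1] [j] 1) = comp C (gi [i, i] [j] 1) (sg i) \<and>
           comp C (nab i j) (sg i) = comp C h (nab (i - 1) j)) \<and>
        (\<exists>h \<in> hom C (gs [i - 1, i - 1] [j]) (gs [i, i] [j]).
           comp C h (gi [i - 1, i - 1] [j] 0) = comp C (gi [i, i] [j] 0) (tu i) \<and>
           comp C h (gi [i - 1, i - 1] [j] 1) = comp C (gi [i, i] [j] 1) (tu i) \<and>
           comp C (nab i j) (tu i) = comp C h (nab (i - 1) j))) \<and>
     (\<forall>i. comp C (kap i) (sg (Suc i)) = cid C (D i) \<and> comp C (kap i) (tu (Suc i)) = cid C (D i)) \<and>
     (\<forall>i. 1 \<le> i \<longrightarrow>
        comp C (w i (i - 1)) (sg i) = tu i \<and> comp C (w i (i - 1)) (tu i) = sg i) \<and>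
     (\<forall>i j. j < i - 1 \<longrightarrow>
        comp C (w i j) (sg i) = comp C (sg i) (w (i - 1) j) \<and>
        comp C (w i j) (tu i) = comp C (tu i) (w (i - 1) j))"

text \<open>Induced composition v *^i_j u = G(nab i j)(\<xi>), \<xi> corresponding to (v,u).\<close>

definition gcomp ::
  "('o \<Rightarrow> 'a set) \<Rightarrow> ('m \<Rightarrow> 'a \<Rightarrow> 'a) \<Rightarrow>
   (nat list \<Rightarrow> nat list \<Rightarrow> 'o) \<Rightarrow> (nat list \<Rightarrow> nat list \<Rightarrow> nat \<Rightarrow> 'm) \<Rightarrow>
   (nat \<Rightarrow> nat \<Rightarrow> 'm) \<Rightarrow> nat \<Rightarrow> nat \<Rightarrow> 'a \<Rightarrow> 'a \<Rightarrow> 'a" where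
  "gcomp GO GM gs gi nab i j v u =
     GM (nab i j) (the_inv_into (GO (gs [i, i] [j])) (canon GM gi [i, i] [j]) [v, u])"

definition gunit :: "('m \<Rightarrow> 'a \<Rightarrow> 'a) \<Rightarrow> (nat \<Rightarrow> 'm) \<Rightarrow> nat \<Rightarrow> 'a \<Rightarrow> 'a" where
  "gunit GM kap i x = GM (kap i) x"

definition arr_sim ::
  "(nat \<Rightarrow> 'o) \<Rightarrow> (nat \<Rightarrow> 'm) \<Rightarrow> (nat \<Rightarrow> 'm) \<Rightarrow> ('o \<Rightarrow> 'a set) \<Rightarrow> ('m \<Rightarrow> 'a \<Rightarrow> 'a) \<Rightarrow>
   nat \<Rightarrow> ('a \<times> 'a) set" where
  "arr_sim D sg tu GO GM n =
     {(u, v). u \<in> GO (D n) \<and> v \<in> GO (D n) \<and>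
        (\<exists>a \<in> GO (D (Suc n)). GM (sg (Suc n)) a = u \<and> GM (tu (Suc n)) a = v)}"

definition Pi_arrows ::
  "(nat \<Rightarrow> 'o) \<Rightarrow> (nat \<Rightarrow> 'm) \<Rightarrow> (nat \<Rightarrow> 'm) \<Rightarrow> ('o \<Rightarrow> 'a set) \<Rightarrow> ('m \<Rightarrow> 'a \<Rightarrow> 'a) \<Rightarrow>
   nat \<Rightarrow> 'a set set" where
  "Pi_arrows D sg tu GO GM n = GO (D n) // arr_sim D sg tu GO GM n"

definition Pi_class ::
  "(nat \<Rightarrow> 'o) \<Rightarrow> (nat \<Rightarrow> 'm) \<Rightarrow> (nat \<Rightarrow> 'm) \<Rightarrow> ('o \<Rightarrow> 'a set) \<Rightarrow> ('m \<Rightarrow> 'a \<Rightarrow> 'a) \<Rightarrow>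
   nat \<Rightarrow> 'a \<Rightarrow> 'a set" where
  "Pi_class D sg tu GO GM n u = arr_sim D sg tu GO GM n `` {u}"

end

theory Submission
  imports Defs
begin


lemma itc_self: "itc C D f m m = cid C (D m)"
  by (cases m) auto

lemma itc_suc:
  assumes "category C" "f (Suc m) \<in> hom C (D m) (D (Suc m))"
  shows "itc C D f (Suc m) m = f (Suc m)"
  using assms by (simp add: itc_self category_def)

lemma pres_comp: "presheaf C GO GM \<Longrightarrow> f \<in> hom C X Y \<Longrightarrow> g \<in> hom C Y Z \<Longrightarrow> x \<in> GO Z
   \<Longrightarrow> GM (comp C g f) x = GM f (GM g x)"
  unfolding presheaf_def by blast

lemma pres_map: "presheaf C GO GM \<Longrightarrow> f \<in> hom C X Y \<Longrightarrow> x \<in> GO Y \<Longrightarrow> GM f x \<in> GO X"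
  unfolding presheaf_def by blast

lemma pres_id: "presheaf C GO GM \<Longrightarrow> X \<in> obj C \<Longrightarrow> x \<in> GO X \<Longrightarrow> GM (cid C X) x = x"
  unfolding presheaf_def by blast

lemma gi_hom:
  assumes "globular_extension C D sg tu gs gi" "k < 2"
  shows "gi [Suc m, Suc m] [m] k \<in> hom C (D (Suc m)) (gs [Suc m, Suc m] [m])"
proof -
  have "is_table [Suc m, Suc m] [m]" by (simp add: is_table_def)
  then have "is_gsum C D sg tu [Suc m, Suc m] [m] (gs [Suc m, Suc m] [m]) (gi [Suc m, Suc m] [m])"
    using assms(1) unfolding globular_extension_def by blast
  then show ?thesis using assms(2) unfolding is_gsum_def gcocone_def
    by (auto simp: less_2_cases_iff)
qed

lemma decomp:
  assumes ge: "globular_extension C D sg tu gs gi"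
    and ig: "infty_groupoid C D sg tu gs gi GO GM"
    and x: "x \<in> GO (D (Suc m))" and y: "y \<in> GO (D (Suc m))"
    and st: "GM (sg (Suc m)) x = GM (tu (Suc m)) y"
  shows "the_inv_into (GO (gs [Suc m, Suc m] [m])) (canon GM gi [Suc m, Suc m] [m]) [x, y]
           \<in> GO (gs [Suc m, Suc m] [m])
      \<and> GM (gi [Suc m, Suc m] [m] 0) (the_inv_into (GO (gs [Suc m, Suc m] [m])) (canon GM gi [Suc m, Suc m] [m]) [x, y]) = x
      \<and> GM (gi [Suc m, Suc m] [m] 1) (the_inv_into (GO (gs [Suc m, Suc m] [m])) (canon GM gi [Suc m, Suc m] [m]) [x, y]) = y"
proof -
  have cat: "category C" and gl: "globe C D sg tu" using ge unfolding globular_extension_def by auto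
  have hs: "sg (Suc m) \<in> hom C (D m) (D (Suc m))" and ht: "tu (Suc m) \<in> hom C (D m) (D (Suc m))"
    using gl unfolding globe_def by auto
  have tab: "is_table [Suc m, Suc m] [m]" by (simp add: is_table_def)
  have bij: "bij_betw (canon GM gi [Suc m, Suc m] [m]) (GO (gs [Suc m, Suc m] [m]))
      (fiberprod C D sg tu GO GM [Suc m, Suc m] [m])"
    using ig tab unfolding infty_groupoid_def by blast
  have fp: "[x, y] \<in> fiberprod C D sg tu GO GM [Suc m, Suc m] [m]"
    using x y st itc_suc[where f=sg, OF cat hs] itc_suc[where f=tu, OF cat ht]
    by (auto simp: fiberprod_def less_Suc_eq nth_Cons')
  define xi where "xi = the_inv_into (GO (gs [Suc m, Suc m] [m])) (canon GM gi [Suc m, Suc m] [m]) [x, y]"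
  have inj: "inj_on (canon GM gi [Suc m, Suc m] [m]) (GO (gs [Suc m, Suc m] [m]))"
    and im: "[x, y] \<in> canon GM gi [Suc m, Suc m] [m] ` GO (gs [Suc m, Suc m] [m])"
    using bij fp unfolding bij_betw_def by auto
  have "xi \<in> GO (gs [Suc m, Suc m] [m])" unfolding xi_def
    by (rule the_inv_into_into[OF inj im]) simp
  moreover have "canon GM gi [Suc m, Suc m] [m] xi = [x, y]" unfolding xi_def
    by (rule f_the_inv_into_f[OF inj im])
  then have "GM (gi [Suc m, Suc m] [m] 0) xi = x \<and> GM (gi [Suc m, Suc m] [m] 1) xi = y"
    by (simp add: canon_def upt_rec)
  ultimately show ?thesis unfolding xi_def by blast
qed

theorem proposition4:
  fixes C :: "('o, 'm) cat" and D :: "nat \<Rightarrow> 'o" and sg tu :: "nat \<Rightarrow> 'm"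
    and gs :: "nat list \<Rightarrow> nat list \<Rightarrow> 'o" and gi :: "nat list \<Rightarrow> nat list \<Rightarrow> nat \<Rightarrow> 'm"
    and GO :: "'o \<Rightarrow> 'a set" and GM :: "'m \<Rightarrow> 'a \<Rightarrow> 'a"
    and nab1 nab2 w1 w2 :: "nat \<Rightarrow> nat \<Rightarrow> 'm" and kap1 kap2 :: "nat \<Rightarrow> 'm"
    and n :: nat
  assumes "globular_extension C D sg tu gs gi"
    and "contractible C D sg tu"
    and "infty_groupoid C D sg tu gs gi GO GM"
    and "pregroupoidal C D sg tu gs gi nab1 kap1 w1"
    and "pregroupoidal C D sg tu gs gi nab2 kap2 w2"
    and "1 \<le> n"
  shows "(\<forall>u \<in> GO (D n). \<forall>v \<in> GO (D n). GM (sg n) v = GM (tu n) u \<longrightarrow>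
            Pi_class D sg tu GO GM n (gcomp GO GM gs gi nab1 n (n - 1) v u) =
            Pi_class D sg tu GO GM n (gcomp GO GM gs gi nab2 n (n - 1) v u))
       \<and> (\<forall>x \<in> GO (D (n - 1)).
            Pi_class D sg tu GO GM n (gunit GM kap1 (n - 1) x) =
            Pi_class D sg tu GO GM n (gunit GM kap2 (n - 1) x))"
  proof -
  note ge = assms(1) and con = assms(2) and ig = assms(3) and P1 = assms(4) and P2 = assms(5)
  have cat: "category C" and gl: "globe C D sg tu" using ge unfolding globular_extension_def by auto
  have pre: "presheaf C GO GM" using ig unfolding infty_groupoid_def by blast
  have hsg: "\<And>k. sg (Suc k) \<in> hom C (D k) (D (Suc k))" and htu: "\<And>k. tu (Suc k) \<in> hom C (D k) (D (Suc k))"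
    using gl unfolding globe_def by auto
  have objD: "\<And>k. D k \<in> obj C" using gl unfolding globe_def by auto
  define R where "R = arr_sim D sg tu GO GM n"
  have sym: "(v, u) \<in> R" if "(u, v) \<in> R" for u v
  proof -
    from that obtain a where u: "u \<in> GO (D n)" and v: "v \<in> GO (D n)" and a: "a \<in> GO (D (Suc n))"
      and as: "GM (sg (Suc n)) a = u" and at: "GM (tu (Suc n)) a = v"
      unfolding R_def arr_sim_def by auto
    have wh: "w1 (Suc n) n \<in> hom C (D (Suc n)) (D (Suc n))" using P1 unfolding pregroupoidal_def by auto
    have w1: "comp C (w1 (Suc n) n) (sg (Suc n)) = tu (Suc n)"
      and w2: "comp C (w1 (Suc n) n) (tu (Suc n)) = sg (Suc n)"
      using P1 unfolding pregroupoidal_def by (metis diff_Suc_1 le_add1 plus_1_eq_Suc)+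
    have b: "GM (w1 (Suc n) n) a \<in> GO (D (Suc n))" by (rule pres_map[OF pre wh a])
    have "GM (sg (Suc n)) (GM (w1 (Suc n) n) a) = v"
      using pres_comp[OF pre hsg wh a] w1 at by simp
    moreover have "GM (tu (Suc n)) (GM (w1 (Suc n) n) a) = u"
      using pres_comp[OF pre htu wh a] w2 as by simp
    ultimately show ?thesis using u v b unfolding R_def arr_sim_def by blast
  qed
  have trans: "(u, z) \<in> R" if "(u, v) \<in> R" "(v, z) \<in> R" for u v z
  proof -
    from that obtain a b where u: "u \<in> GO (D n)" and z: "z \<in> GO (D n)" and a: "a \<in> GO (D (Suc n))"
      and as: "GM (sg (Suc n)) a = u" and at: "GM (tu (Suc n)) a = v"
      and b: "b \<in> GO (D (Suc n))"
      and bs: "GM (sg (Suc n)) b = v" and bt: "GM (tu (Suc n)) b = z"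
      unfolding R_def arr_sim_def by auto
    obtain xi where xi: "xi \<in> GO (gs [Suc n, Suc n] [n])"
      and x0: "GM (gi [Suc n, Suc n] [n] 0) xi = b" and x1: "GM (gi [Suc n, Suc n] [n] 1) xi = a"
      using decomp[OF ge ig b a] bs at by metis
    have nh: "nab1 (Suc n) n \<in> hom C (D (Suc n)) (gs [Suc n, Suc n] [n])"
      using P1 unfolding pregroupoidal_def by auto
    have n1: "comp C (nab1 (Suc n) n) (sg (Suc n)) = comp C (gi [Suc n, Suc n] [n] 1) (sg (Suc n))"
      and n2: "comp C (nab1 (Suc n) n) (tu (Suc n)) = comp C (gi [Suc n, Suc n] [n] 0) (tu (Suc n))"
      using P1 unfolding pregroupoidal_def by (metis diff_Suc_1 le_add1 plus_1_eq_Suc)+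
    have g0: "gi [Suc n, Suc n] [n] 0 \<in> hom C (D (Suc n)) (gs [Suc n, Suc n] [n])"
      and g1: "gi [Suc n, Suc n] [n] 1 \<in> hom C (D (Suc n)) (gs [Suc n, Suc n] [n])"
      using gi_hom[OF ge] by auto
    have c: "GM (nab1 (Suc n) n) xi \<in> GO (D (Suc n))" by (rule pres_map[OF pre nh xi])
    have "GM (sg (Suc n)) (GM (nab1 (Suc n) n) xi) = u"
      using pres_comp[OF pre hsg nh xi] n1 pres_comp[OF pre hsg g1 xi] x1 as by simp
    moreover have "GM (tu (Suc n)) (GM (nab1 (Suc n) n) xi) = z"
      using pres_comp[OF pre htu nh xi] n2 pres_comp[OF pre htu g0 xi] x0 bt by simp
    ultimately show ?thesis using u z c unfolding R_def arr_sim_def by blast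
  qed
  have key: "Pi_class D sg tu GO GM n p = Pi_class D sg tu GO GM n q" if "(p, q) \<in> R" for p q
    unfolding Pi_class_def R_def[symmetric] using that sym trans by blast
  obtain m where nm: "n = Suc m" using assms(6) by (cases n) auto
  have part1: "\<forall>u \<in> GO (D n). \<forall>v \<in> GO (D n). GM (sg n) v = GM (tu n) u \<longrightarrow>
            Pi_class D sg tu GO GM n (gcomp GO GM gs gi nab1 n (n - 1) v u) =
            Pi_class D sg tu GO GM n (gcomp GO GM gs gi nab2 n (n - 1) v u)"
  proof (intro ballI impI)
    fix u v assume u: "u \<in> GO (D n)" and v: "v \<in> GO (D n)" and st: "GM (sg n) v = GM (tu n) u"
    define xi where "xi = the_inv_into (GO (gs [Suc m, Suc m] [m])) (canon GM gi [Suc m, Suc m] [m]) [v, u]"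
    have xi: "xi \<in> GO (gs [Suc m, Suc m] [m])"
      using decomp[OF ge ig, of v m u] u v st nm unfolding xi_def by simp
    have nh1: "nab1 (Suc m) m \<in> hom C (D (Suc m)) (gs [Suc m, Suc m] [m])"
      using P1 unfolding pregroupoidal_def by auto
    have nh2: "nab2 (Suc m) m \<in> hom C (D (Suc m)) (gs [Suc m, Suc m] [m])"
      using P2 unfolding pregroupoidal_def by auto
    have e1: "comp C (nab1 (Suc m) m) (sg (Suc m)) = comp C (nab2 (Suc m) m) (sg (Suc m))"
      and e2: "comp C (nab1 (Suc m) m) (tu (Suc m)) = comp C (nab2 (Suc m) m) (tu (Suc m))"
      using P1 P2 unfolding pregroupoidal_def by (metis diff_Suc_1 le_add1 plus_1_eq_Suc)+
    have tab: "is_table [Suc m, Suc m] [m]" by (simp add: is_table_def)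
    have gsum: "is_gsum C D sg tu [Suc m, Suc m] [m] (gs [Suc m, Suc m] [m]) (gi [Suc m, Suc m] [m])"
      using ge tab unfolding globular_extension_def by blast
    have td: "tdim [Suc m, Suc m] [m] \<le> Suc m + 1" by (simp add: tdim_def)
    obtain h where hh: "h \<in> hom C (D (Suc (Suc m))) (gs [Suc m, Suc m] [m])"
      and hs: "comp C h (sg (Suc (Suc m))) = nab1 (Suc m) m"
      and ht: "comp C h (tu (Suc (Suc m))) = nab2 (Suc m) m"
      using con tab td gsum nh1 nh2 e1 e2 unfolding contractible_def glob_parallel_def by blast
    have a: "GM h xi \<in> GO (D (Suc (Suc m)))" by (rule pres_map[OF pre hh xi])
    have "GM (sg (Suc (Suc m))) (GM h xi) = GM (nab1 (Suc m) m) xi"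
      using pres_comp[OF pre hsg hh xi] hs by simp
    moreover have "GM (tu (Suc (Suc m))) (GM h xi) = GM (nab2 (Suc m) m) xi"
      using pres_comp[OF pre htu hh xi] ht by simp
    moreover have "GM (nab1 (Suc m) m) xi \<in> GO (D (Suc m))" by (rule pres_map[OF pre nh1 xi])
    moreover have "GM (nab2 (Suc m) m) xi \<in> GO (D (Suc m))" by (rule pres_map[OF pre nh2 xi])
    ultimately have "(GM (nab1 (Suc m) m) xi, GM (nab2 (Suc m) m) xi) \<in> R"
      using a unfolding R_def arr_sim_def nm by blast
    then show "Pi_class D sg tu GO GM n (gcomp GO GM gs gi nab1 n (n - 1) v u) =
            Pi_class D sg tu GO GM n (gcomp GO GM gs gi nab2 n (n - 1) v u)"
      using key unfolding gcomp_def nm xi_def by simp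
  qed
  have part2: "\<forall>x \<in> GO (D (n - 1)).
            Pi_class D sg tu GO GM n (gunit GM kap1 (n - 1) x) =
            Pi_class D sg tu GO GM n (gunit GM kap2 (n - 1) x)"
  proof
    fix x assume x0: "x \<in> GO (D (n - 1))"
    then have x: "x \<in> GO (D m)" using nm by simp
    have kh1: "kap1 m \<in> hom C (D (Suc m)) (D m)" and kh2: "kap2 m \<in> hom C (D (Suc m)) (D m)"
      using P1 P2 unfolding pregroupoidal_def by auto
    have k1: "comp C (kap1 m) (sg (Suc m)) = cid C (D m)" "comp C (kap1 m) (tu (Suc m)) = cid C (D m)"
      and k2: "comp C (kap2 m) (sg (Suc m)) = cid C (D m)" "comp C (kap2 m) (tu (Suc m)) = cid C (D m)"
      using P1 P2 unfolding pregroupoidal_def by auto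
    have tab: "is_table [m] []" by (simp add: is_table_def)
    have td: "tdim [m] [] \<le> Suc m + 1" by (simp add: tdim_def)
    have cidh: "cid C (D m) \<in> hom C (D m) (D m)" using cat objD[of m] unfolding category_def by blast
    have gc: "gcocone C D sg tu [m] [] (D m) (\<lambda>k. cid C (D m))"
      unfolding gcocone_def using objD[of m] cidh by simp
    have univ: "\<exists>!h. h \<in> hom C (D m) X \<and> (\<forall>k<length [m]. comp C h (cid C (D m)) = f k)"
      if "gcocone C D sg tu [m] [] X f" for X f
    proof -
      from that have f0: "f 0 \<in> hom C (D m) X" unfolding gcocone_def by auto
      have idr: "\<And>g. g \<in> hom C (D m) X \<Longrightarrow> comp C g (cid C (D m)) = g"
        using cat unfolding category_def by blast
      show ?thesis
        using f0 idr by (intro ex1I[of _ "f 0"]) auto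
    qed
    have gsum: "is_gsum C D sg tu [m] [] (D m) (\<lambda>k. cid C (D m))"
      unfolding is_gsum_def using gc univ by simp
    obtain h where hh: "h \<in> hom C (D (Suc (Suc m))) (D m)"
      and hs: "comp C h (sg (Suc (Suc m))) = kap1 m"
      and ht: "comp C h (tu (Suc (Suc m))) = kap2 m"
      using con tab td gsum kh1 kh2 k1 k2 unfolding contractible_def glob_parallel_def by metis
    have a: "GM h x \<in> GO (D (Suc (Suc m)))" by (rule pres_map[OF pre hh x])
    have "GM (sg (Suc (Suc m))) (GM h x) = GM (kap1 m) x"
      using pres_comp[OF pre hsg hh x] hs by simp
    moreover have "GM (tu (Suc (Suc m))) (GM h x) = GM (kap2 m) x"
      using pres_comp[OF pre htu hh x] ht by simp
    moreover have "GM (kap1 m) x \<in> GO (D (Suc m))" by (rule pres_map[OF pre kh1 x])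
    moreover have "GM (kap2 m) x \<in> GO (D (Suc m))" by (rule pres_map[OF pre kh2 x])
    ultimately have "(GM (kap1 m) x, GM (kap2 m) x) \<in> R"
      using a unfolding R_def arr_sim_def nm by blast
    then show "Pi_class D sg tu GO GM n (gunit GM kap1 (n - 1) x) =
            Pi_class D sg tu GO GM n (gunit GM kap2 (n - 1) x)"
      using key unfolding gunit_def nm by simp
  qed
  show ?thesis using part1 part2 by blast
qed

end
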